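(* Let $n$ and $s$ be nonnegative integers with $s\le n$. Then, as an identity of rational functions in the indeterminates $q$ and $x$, $$\left(\sum_{k=s}^{n}\frac{(q^{-2n};q^2)_k\,(x;q)_k\,q^k}{(q;q)_{k-s}(q;q)_{k+s}}\right)\left(\sum_{k=s}^{n}\frac{(q^{-2n};q^2)_k\,(q/x;q)_k\,q^k}{(q;q)_{k-s}(q;q)_{k+s}}\right)$$ $$=\frac{(-1)^n(q^2;q^2)_n^2\,q^{-n^2}}{(q^2;q^2)_{n-s}(q^2;q^2)_{n+s}}\sum_{k=s}^{n}\frac{(-1)^k(q^2;q^2)_{n+k}\,(x;q)_k\,(q/x;q)_k\,q^{k^2-2nk}}{(q^2;q^2)_{n-k}\,(q;q)_{k-s}\,(q;q)_{k+s}\,(q;q)_{2k}}.$$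
   Context: For an indeterminate $q$ and an integer $n\ge 0$: $(a;q)_0=1$ and $(a;q)_n=(1-a)(1-aq)\cdots(1-aq^{n-1})$. *)

theory Defs
  imports Complex_Main
begin

definition qpoch :: "'a::field \<Rightarrow> 'a \<Rightarrow> nat \<Rightarrow> 'a" where
  "qpoch a q n = (\<Prod>i<n. (1 - a * q ^ i))"

end

theory Submission
  imports Defs "HOL-Computational_Algebra.Polynomial"
begin


lemma qpoch_0[simp]: "qpoch a q 0 = 1" by (simp add: qpoch_def)
lemma qpoch_Suc: "qpoch a q (Suc n) = qpoch a q n * (1 - a*q^n)"
  by (simp add: qpoch_def)
lemma qpoch_add: "qpoch a q (m+n) = qpoch a q m * qpoch (a*q^m) q n"
  by (induct n) (simp_all add: qpoch_Suc power_add mult.assoc)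
lemma qpoch_Suc_left: "qpoch a q (Suc n) = (1-a) * qpoch (a*q) q n"
  using qpoch_add[of a q 1 n] by (simp add: qpoch_Suc)

lemma qpoch_nz:
  fixes a q :: "'a::field"
  assumes "\<And>i. i < n \<Longrightarrow> a*q^i \<noteq> 1" shows "qpoch a q n \<noteq> 0"
  using assms by (simp add: qpoch_def)

locale qctx =
  fixes q :: "'a::field_char_0"
  assumes q0: "q \<noteq> 0" and qnr: "\<And>j::nat. j \<ge> 1 \<Longrightarrow> q^j \<noteq> 1"
begin

lemma qpow_ne1: "j > 0 \<Longrightarrow> q^j \<noteq> 1" using qnr by auto

lemma qpoch_qq_nz: "qpoch q q n \<noteq> 0"
  apply (rule qpoch_nz)
  using qnr[of "Suc _"] by (simp add: mult.commute)

lemma qpoch_inv_zero: "m < j \<Longrightarrow> qpoch (inverse (q^m)) q j = 0"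
  using q0 by (auto simp: qpoch_def intro!: bexI[of _ m])

lemma qpow_inj: "q^i = q^j \<Longrightarrow> i = j"
proof (rule ccontr)
  assume h: "q^i = q^j" "i \<noteq> j"
  have key: "False" if ab: "a < b" "q^a = q^b" for a b :: nat
  proof -
    have "q^a * q^(b-a) = q^b" using ab(1) by (simp add: power_add[symmetric])
    then have "q^a * q^(b-a) = q^a * 1" using ab(2) by simp
    then have "q^(b-a) = 1" using q0 by simp
    with ab qpow_ne1[of "b-a"] show False by simp
  qed
  from h show False using key by (metis linorder_neqE_nat)
qed

definition cN :: "nat \<Rightarrow> nat \<Rightarrow> 'a" where
  "cN N l = qpoch (inverse (q^N)) q l * q^l / qpoch q q l"

lemma cN_0[simp]: "cN N 0 = 1" by (simp add: cN_def)
lemma cN_top: "cN N (Suc N) = 0" by (simp add: cN_def qpoch_inv_zero)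

lemma cN_rec: "cN (Suc N) (Suc l) = inverse (q^Suc l) * cN N (Suc l) - inverse (q^l) * cN N l"
proof -
  define X where "X = qpoch (inverse (q^N)) q l"
  have nz: "qpoch q q l \<noteq> 0" "1 - q^Suc l \<noteq> 0" using qpoch_qq_nz qpow_ne1[of "Suc l"] by auto
  have e1: "qpoch (inverse (q^Suc N)) q (Suc l) = (1 - inverse (q^Suc N)) * X"
    unfolding qpoch_Suc_left X_def using q0 by (simp add: field_simps)
  have e2: "qpoch (inverse (q^N)) q (Suc l) = X * (1 - inverse (q^N) * q^l)"
    unfolding qpoch_Suc X_def ..
  have e3: "qpoch q q (Suc l) = qpoch q q l * (1 - q^Suc l)"
    by (simp add: qpoch_Suc)
  show ?thesis unfolding cN_def e1 e2 e3 X_def[symmetric]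
    using nz q0 by (simp add: field_simps)
qed

lemma CV: "(\<Sum>l\<le>N. cN N l * qpoch B q l * qpoch (C*q^l) q (N-l)) = (\<Prod>i<N. B - C*q^i)"
proof (induct N arbitrary: C)
  case 0 show ?case by simp
next
  case (Suc N)
  define T where "T l = qpoch B q l * qpoch (C*q^l) q (Suc N - l)" for l
  have "(\<Sum>l\<le>Suc N. cN (Suc N) l * qpoch B q l * qpoch (C*q^l) q (Suc N-l))
      = (\<Sum>l\<le>Suc N. cN (Suc N) l * T l)" by (simp add: T_def mult.assoc)
  also have "\<dots> = T 0 + (\<Sum>l\<le>N. cN (Suc N) (Suc l) * T (Suc l))"
    unfolding sum.atMost_Suc_shift by simp
  also have "\<dots> = (T 0 + (\<Sum>l\<le>N. inverse(q^Suc l) * cN N (Suc l) * T (Suc l)))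
         - (\<Sum>l\<le>N. inverse (q^l) * cN N l * T (Suc l))"
    by (simp add: cN_rec algebra_simps sum_subtractf)
  also have "T 0 + (\<Sum>l\<le>N. inverse(q^Suc l) * cN N (Suc l) * T (Suc l))
       = (\<Sum>l\<le>Suc N. inverse (q^l) * cN N l * T l)"
    unfolding sum.atMost_Suc_shift by simp
  also have "\<dots> = (\<Sum>l\<le>N. inverse (q^l) * cN N l * T l)" by (simp add: cN_top)
  also have "(\<Sum>l\<le>N. inverse (q^l) * cN N l * T l) - (\<Sum>l\<le>N. inverse (q^l) * cN N l * T (Suc l))
      = (\<Sum>l\<le>N. (B - C) * (cN N l * qpoch B q l * qpoch ((C*q)*q^l) q (N-l)))"
    unfolding sum_subtractf[symmetric]
  proof (rule sum.cong[OF refl])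
    fix l assume "l \<in> {..N}"
    then have lN: "l \<le> N" by simp
    have t1: "T l = qpoch B q l * (1 - C*q^l) * qpoch ((C*q)*q^l) q (N-l)"
      unfolding T_def using lN by (simp add: Suc_diff_le qpoch_Suc_left mult_ac)
    have t2: "T (Suc l) = qpoch B q l * (1 - B*q^l) * qpoch ((C*q)*q^l) q (N-l)"
      unfolding T_def using lN by (simp add: qpoch_Suc mult_ac)
    show "inverse (q^l) * cN N l * T l - inverse (q^l) * cN N l * T (Suc l)
        = (B - C) * (cN N l * qpoch B q l * qpoch ((C*q)*q^l) q (N-l))"
      unfolding t1 t2 using q0 by (simp add: field_simps)
  qed
  also have "\<dots> = (B - C) * (\<Prod>i<N. B - (C*q)*q^i)"
    unfolding sum_distrib_left[symmetric] Suc[of "C*q"] ..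
  also have "\<dots> = (\<Prod>i<Suc N. B - C*q^i)"
    unfolding prod.lessThan_Suc_shift by (simp add: mult_ac)
  finally show ?case .
qed

lemma CV_div:
  assumes "qpoch C q N \<noteq> 0"
  shows "(\<Sum>l\<le>N. cN N l * qpoch B q l / qpoch C q l) = (\<Prod>i<N. B - C*q^i) / qpoch C q N"
proof -
  have "(\<Sum>l\<le>N. cN N l * qpoch B q l / qpoch C q l)
      = (\<Sum>l\<le>N. cN N l * qpoch B q l * qpoch (C*q^l) q (N-l) / qpoch C q N)"
  proof (rule sum.cong[OF refl])
    fix l assume "l \<in> {..N}"
    then have e: "qpoch C q N = qpoch C q l * qpoch (C*q^l) q (N-l)"
      using qpoch_add[of C q l "N-l"] by simp
    with assms have "qpoch C q l \<noteq> 0" "qpoch (C*q^l) q (N-l) \<noteq> 0" by auto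
    then show "cN N l * qpoch B q l / qpoch C q l
       = cN N l * qpoch B q l * qpoch (C*q^l) q (N-l) / qpoch C q N"
      unfolding e by (simp add: field_simps)
  qed
  also have "\<dots> = (\<Prod>i<N. B - C*q^i) / qpoch C q N"
    unfolding sum_divide_distrib[symmetric] CV ..
  finally show ?thesis .
qed

definition piq :: "nat \<Rightarrow> 'a" where "piq k = (\<Prod>i<k. - (q^i))"

definition eb :: "nat \<Rightarrow> nat \<Rightarrow> 'a" where
  "eb j k = (if k \<le> j then qpoch q q j / (qpoch q q k * qpoch q q (j-k)) * piq k else 0)"

lemma eb_0[simp]: "eb j 0 = 1" using qpoch_qq_nz by (simp add: eb_def piq_def)

lemma eb_pascal: "k \<le> j \<Longrightarrow> eb (Suc j) (Suc k) = eb j (Suc k) - q^j * eb j k"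
proof (cases "k = j")
  case True
  then show ?thesis using qpoch_qq_nz by (simp add: eb_def piq_def)
next
  case False
  assume "k \<le> j"
  with False obtain r where j: "j = Suc (k + r)" by (metis le_neq_implies_less less_iff_Suc_add)
  have nz: "qpoch q q k \<noteq> 0" "qpoch q q r \<noteq> 0" "qpoch q q j \<noteq> 0"
    "1 - q^Suc k \<noteq> 0" "1 - q^Suc r \<noteq> 0" "q * q^k \<noteq> 1" "q * q^r \<noteq> 1"
    using qpoch_qq_nz qpow_ne1[of "Suc k"] qpow_ne1[of "Suc r"] by auto
  have d1: "Suc j - Suc k = Suc r" "j - Suc k = r" "j - k = Suc r" using j by auto
  define X where "X = qpoch q q j * piq k / (qpoch q q k * qpoch q q r)"
  define a where "a = 1 - q^Suc k"
  define c where "c = 1 - q^Suc r"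
  have a0: "a \<noteq> 0" and c0: "c \<noteq> 0" using nz by (auto simp: a_def c_def)
  have pk: "piq (Suc k) = piq k * (- (q^k))" by (simp add: piq_def)
  have e1: "eb (Suc j) (Suc k) = X * (1 - q^Suc j) * (- (q^k)) / (a * c)"
    unfolding eb_def X_def a_def c_def using \<open>k \<le> j\<close> nz
    by (simp add: d1 qpoch_Suc pk field_simps)
  have e2: "eb j (Suc k) = X * (- (q^k)) / a"
    unfolding eb_def X_def a_def c_def using \<open>k \<le> j\<close> j nz
    by (simp add: d1 qpoch_Suc pk field_simps)
  have e3: "eb j k = X / c"
    unfolding eb_def X_def a_def c_def using \<open>k \<le> j\<close> nz
    by (simp add: d1 qpoch_Suc pk field_simps)
  have key: "(1 - q^Suc j) * (- (q^k)) = (- (q^k)) * c - q^j * a"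
    unfolding a_def c_def j by (simp add: algebra_simps power_add)
  show ?thesis unfolding e1 e2 e3 using a0 c0
    by (simp add: field_simps) (simp add: a_def c_def j algebra_simps power_add)
qed

lemma QB: "qpoch d q j = (\<Sum>k\<le>j. eb j k * d^k)"
proof (induct j)
  case 0 show ?case by (simp add: eb_def piq_def)
next
  case (Suc j)
  have top: "eb j (Suc j) = 0" by (simp add: eb_def)
  have "(\<Sum>k\<le>Suc j. eb (Suc j) k * d^k) = 1 + (\<Sum>k\<le>j. eb (Suc j) (Suc k) * d^Suc k)"
    unfolding sum.atMost_Suc_shift by simp
  also have "\<dots> = (1 + (\<Sum>k\<le>j. eb j (Suc k) * d^Suc k)) - q^j * d * (\<Sum>k\<le>j. eb j k * d^k)"
    by (simp add: eb_pascal algebra_simps sum_subtractf sum_distrib_left)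
  also have "1 + (\<Sum>k\<le>j. eb j (Suc k) * d^Suc k) = (\<Sum>k\<le>j. eb j k * d^k)"
  proof -
    have "1 + (\<Sum>k\<le>j. eb j (Suc k) * d^Suc k) = (\<Sum>k\<le>Suc j. eb j k * d^k)"
      unfolding sum.atMost_Suc_shift by simp
    also have "\<dots> = (\<Sum>k\<le>j. eb j k * d^k)" by (simp add: top)
    finally show ?thesis .
  qed
  finally show ?case unfolding Suc[symmetric] qpoch_Suc by (simp add: algebra_simps)
qed

lemma K1: "qpoch (inverse (q^(k+N))) q k * piq k * q^(k*(N+1)) * qpoch q q N = qpoch q q (k+N)"
proof (induct k arbitrary: N)
  case 0 show ?case by (simp add: piq_def)
next
  case (Suc k)
  have ih: "qpoch (inverse (q^(k+Suc N))) q k * piq k * q^(k*(N+2)) * qpoch q q (Suc N) = qpoch q q (k+Suc N)"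
    using Suc[of "Suc N"] by simp
  have "qpoch (inverse (q^(Suc k+N))) q (Suc k) * piq (Suc k) * q^(Suc k*(N+1)) * qpoch q q N
     = qpoch (inverse (q^(k+Suc N))) q k * piq k * q^(k*(N+2)) * qpoch q q (Suc N)"
    using q0 by (simp add: qpoch_Suc piq_def field_simps power_add power_mult_distrib)
  also have "\<dots> = qpoch q q (Suc k + N)" using ih by simp
  finally show ?case .
qed

end


lemma sum_shift_zero:
  fixes f :: "nat \<Rightarrow> 'a::comm_monoid_add"
  assumes "\<And>j. j < k \<Longrightarrow> f j = 0"
  shows "(\<Sum>j\<le>k+N. f j) = (\<Sum>r\<le>N. f (k+r))"
proof (induct N)
  case 0
  have "(\<Sum>j\<le>k. f j) = (\<Sum>j<k. f j) + f k" by (simp add: lessThan_Suc_atMost[symmetric])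
  then show ?case using assms by simp
next
  case (Suc N) then show ?case by simp
qed

lemma sum_extend_zero:
  fixes g :: "nat \<Rightarrow> 'a::comm_monoid_add"
  assumes "j \<le> m" "\<And>k. j < k \<Longrightarrow> k \<le> m \<Longrightarrow> g k = 0"
  shows "(\<Sum>k\<le>j. g k) = (\<Sum>k\<le>m. g k)"
  by (rule sum.mono_neutral_left) (use assms in auto)

lemma sum_atMost_rev: "(\<Sum>k\<le>m. f k) = (\<Sum>k\<le>(m::nat). f (m-k))"
  by (rule sum.reindex_bij_witness[where i="\<lambda>k. m-k" and j="\<lambda>k. m-k"]) auto

locale qbctx = qctx +
  fixes b :: 'a
  assumes b0: "b \<noteq> 0" and bnr: "\<And>i. b * q^i \<noteq> 1"
begin

lemma qpoch_bk_nz: "qpoch (b*q^k) q n \<noteq> 0"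
  by (rule qpoch_nz) (metis bnr mult.assoc power_add)

lemma qpoch_b_nz: "qpoch b q n \<noteq> 0"
  using qpoch_bk_nz[of 0] by simp

lemma prod_yb: "y \<noteq> 0 \<Longrightarrow> (\<Prod>i<N. y - b*q^i) = y^N * qpoch (b/y) q N"
proof -
  assume y: "y \<noteq> 0"
  have "(\<Prod>i<N. y - b*q^i) = (\<Prod>i<N. y * (1 - b/y*q^i))"
    by (rule prod.cong) (use y in \<open>auto simp: field_simps\<close>)
  then show ?thesis by (simp add: prod.distrib qpoch_def)
qed

definition G :: "nat \<Rightarrow> 'a \<Rightarrow> 'a \<Rightarrow> 'a" where
  "G m d y = (\<Sum>j\<le>m. qpoch (inverse (q^m)) q j * qpoch d q j * qpoch y q j * q^j
                      / (qpoch q q j * qpoch b q j))"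

lemma inv_shift: "inverse (q^(k+N)) * q^k = inverse (q^N)"
  using q0 by (simp add: power_add field_simps)

lemma E_inner:
  assumes y: "y \<noteq> 0" and km: "k \<le> m"
  shows "(\<Sum>j\<le>m. (qpoch (inverse (q^m)) q j * qpoch y q j * q^j / (qpoch q q j * qpoch b q j)) * eb j k)
   = qpoch q q m * qpoch y q k * qpoch (b/y) q (m-k) * y^(m-k)
       / (qpoch q q k * qpoch q q (m-k) * qpoch b q m)"
proof -
  obtain N where m: "m = k + N" using km le_Suc_ex by blast
  define f where "f j = (qpoch (inverse (q^m)) q j * qpoch y q j * q^j / (qpoch q q j * qpoch b q j)) * eb j k" for j
  define cst where "cst = qpoch (inverse (q^(k+N))) q k * qpoch y q k * q^k * piq k / (qpoch q q k * qpoch b q k)"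
  have "(\<Sum>j\<le>m. f j) = (\<Sum>r\<le>N. f (k+r))"
    unfolding m by (rule sum_shift_zero) (simp add: f_def eb_def)
  also have "\<dots> = (\<Sum>r\<le>N. cst * (cN N r * qpoch (y*q^k) q r / qpoch (b*q^k) q r))"
  proof (rule sum.cong[OF refl])
    fix r
    have nz: "qpoch q q k \<noteq> 0" "qpoch q q r \<noteq> 0" "qpoch q q (k+r) \<noteq> 0" "qpoch b q k \<noteq> 0"
      "qpoch (b*q^k) q r \<noteq> 0" using qpoch_qq_nz qpoch_b_nz qpoch_bk_nz by auto
    have c1: "qpoch (inverse (q^(k+N))) q (k+r) = qpoch (inverse (q^(k+N))) q k * qpoch (inverse (q^N)) q r"
      unfolding qpoch_add inv_shift ..
    show "f (k+r) = cst * (cN N r * qpoch (y*q^k) q r / qpoch (b*q^k) q r)"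
      unfolding f_def cst_def cN_def eb_def m c1 using nz
      by (simp add: qpoch_add[of y q k r] qpoch_add[of b q k r] power_add field_simps)
  qed
  also have "\<dots> = cst * ((\<Prod>i<N. y*q^k - b*q^k*q^i) / qpoch (b*q^k) q N)"
    unfolding sum_distrib_left[symmetric] by (rule arg_cong[where f="\<lambda>x. cst * x"], rule CV_div, rule qpoch_bk_nz)
  also have "(\<Prod>i<N. y*q^k - b*q^k*q^i) = q^(k*N) * (y^N * qpoch (b/y) q N)"
  proof -
    have "(\<Prod>i<N. y*q^k - b*q^k*q^i) = (\<Prod>i<N. q^k * (y - b*q^i))"
      by (rule prod.cong) (auto simp: algebra_simps)
    also have "\<dots> = q^(k*N) * (\<Prod>i<N. y - b*q^i)" by (simp add: prod.distrib power_mult)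
    finally show ?thesis using prod_yb[OF y] by simp
  qed
  also have "cst * (q^(k*N) * (y^N * qpoch (b/y) q N) / qpoch (b*q^k) q N)
     = qpoch q q m * qpoch y q k * qpoch (b/y) q (m-k) * y^(m-k)
       / (qpoch q q k * qpoch q q (m-k) * qpoch b q m)"
  proof -
    have K: "qpoch (inverse (q^(k+N))) q k * piq k * q^k * q^(k*N) * qpoch q q N = qpoch q q (k+N)"
      using K1[of k N] by (simp add: power_add mult_ac)
    have nz: "qpoch q q k \<noteq> 0" "qpoch q q N \<noteq> 0" "qpoch b q k \<noteq> 0"
      "qpoch (b*q^k) q N \<noteq> 0" using qpoch_qq_nz qpoch_b_nz qpoch_bk_nz by auto
    show ?thesis unfolding cst_def m qpoch_add[of b q k N] K[symmetric] using nz
      by (simp add: field_simps)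
  qed
  finally show ?thesis unfolding f_def .
qed

lemma E:
  assumes y: "y \<noteq> 0"
  shows "G m d y = qpoch q q m / qpoch b q m * (\<Sum>k\<le>m. qpoch y q k * qpoch (b/y) q (m-k) * d^k * y^(m-k)
                          / (qpoch q q k * qpoch q q (m-k)))"
proof -
  define a where "a j = qpoch (inverse (q^m)) q j * qpoch y q j * q^j / (qpoch q q j * qpoch b q j)" for j
  have "G m d y = (\<Sum>j\<le>m. a j * qpoch d q j)"
    unfolding G_def a_def by (rule sum.cong) (simp_all add: algebra_simps)
  also have "\<dots> = (\<Sum>j\<le>m. \<Sum>k\<le>m. a j * eb j k * d^k)"
  proof (rule sum.cong[OF refl])
    fix j assume "j \<in> {..m}"
    then have jm: "j \<le> m" by simp
    have "a j * qpoch d q j = (\<Sum>k\<le>j. a j * eb j k * d^k)"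
      unfolding QB[of d j] by (simp add: sum_distrib_left mult.assoc)
    also have "\<dots> = (\<Sum>k\<le>m. a j * eb j k * d^k)"
      by (rule sum_extend_zero) (use jm in \<open>auto simp: eb_def\<close>)
    finally show "a j * qpoch d q j = (\<Sum>k\<le>m. a j * eb j k * d^k)" .
  qed
  also have "\<dots> = (\<Sum>k\<le>m. d^k * (\<Sum>j\<le>m. a j * eb j k))"
    by (subst sum.swap) (simp add: sum_distrib_left mult_ac)
  also have "\<dots> = (\<Sum>k\<le>m. d^k * (qpoch q q m * qpoch y q k * qpoch (b/y) q (m-k) * y^(m-k)
       / (qpoch q q k * qpoch q q (m-k) * qpoch b q m)))"
    by (rule sum.cong[OF refl], unfold a_def, simp only: E_inner[OF y] atMost_iff)
  also have "\<dots> = qpoch q q m / qpoch b q m * (\<Sum>k\<le>m. qpoch y q k * qpoch (b/y) q (m-k) * d^k * y^(m-k)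
                          / (qpoch q q k * qpoch q q (m-k)))"
    unfolding sum_distrib_left
    by (rule sum.cong[OF refl]) (simp add: field_simps)
  finally show ?thesis .
qed

lemma T:
  assumes y: "y \<noteq> 0" and d: "d \<noteq> 0"
  shows "y^m * G m d (b/y) = d^m * G m (b/d) y"
proof -
  have by0: "b/y \<noteq> 0" using b0 y by simp
  have "y^m * G m d (b/y) = qpoch q q m / qpoch b q m * (\<Sum>k\<le>m. y^m * (qpoch (b/y) q k * qpoch y q (m-k) * d^k * (b/y)^(m-k)
                          / (qpoch q q k * qpoch q q (m-k))))"
    unfolding E[OF by0] using b0 y by (simp add: sum_distrib_left mult_ac)
  also have "(\<Sum>k\<le>m. y^m * (qpoch (b/y) q k * qpoch y q (m-k) * d^k * (b/y)^(m-k)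
                          / (qpoch q q k * qpoch q q (m-k))))
     = (\<Sum>k\<le>m. d^m * (qpoch y q k * qpoch (b/y) q (m-k) * (b/d)^k * y^(m-k)
                          / (qpoch q q k * qpoch q q (m-k))))"
    apply (subst sum_atMost_rev)
    apply (rule sum.cong[OF refl])
  proof -
    fix k assume "k \<in> {..m}"
    then have km: "k \<le> m" by simp
    then have e: "m - (m - k) = k" by simp
    have p1: "y^m = y^k * y^(m-k)" "d^m = d^k * d^(m-k)" using km by (simp_all add: power_add[symmetric])
    show "y^m * (qpoch (b/y) q (m-k) * qpoch y q (m-(m-k)) * d^(m-k) * (b/y)^(m-(m-k))
                          / (qpoch q q (m-k) * qpoch q q (m-(m-k))))
        = d^m * (qpoch y q k * qpoch (b/y) q (m-k) * (b/d)^k * y^(m-k)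
                          / (qpoch q q k * qpoch q q (m-k)))"
      unfolding e p1 using y d by (simp add: field_simps power_divide)
  qed
  also have "qpoch q q m / qpoch b q m * \<dots> = d^m * G m (b/d) y"
    unfolding E[OF y] by (simp add: sum_distrib_left mult_ac)
  finally show ?thesis .
qed

end


lemma coeff_mult_bound:
  fixes p r :: "'a::idom poly"
  assumes "degree p \<le> a" "degree r \<le> c"
  shows "coeff (p*r) (a+c) = coeff p a * coeff r c"
proof (cases "degree p = a \<and> degree r = c")
  case True then show ?thesis using coeff_mult_degree_sum[of p r] by simp
next
  case False
  then have lt: "degree p + degree r < a + c" using assms by auto
  have "degree (p*r) < a + c" using degree_mult_le[of p r] lt by simp
  then have "coeff (p*r) (a+c) = 0" by (simp add: coeff_eq_0)
  moreover have "coeff p a * coeff r c = 0"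
    using False assms by (auto simp: coeff_eq_0 le_neq_implies_less)
  ultimately show ?thesis by simp
qed

context qbctx begin

definition pq :: "nat \<Rightarrow> 'a poly" where "pq n = (\<Prod>i<n. [:1, -(q^i):])"
definition rq :: "nat \<Rightarrow> 'a poly" where "rq n = (\<Prod>i<n. [:-(b*q^i), 1:])"

lemma poly_pq: "poly (pq n) x = qpoch x q n"
  by (simp add: pq_def qpoch_def poly_prod mult_ac)

lemma poly_rq: "x \<noteq> 0 \<Longrightarrow> poly (rq n) x = x^n * qpoch (b/x) q n"
  using prod_yb[of x n] by (simp add: rq_def poly_prod)

lemma degree_pq: "degree (pq n) = n"
proof -
  have "degree (pq n) = (\<Sum>i<n. degree [:1, -(q^i):])"
    unfolding pq_def by (rule degree_prod_sum_eq) (use q0 in auto)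
  also have "\<dots> = n" using q0 by simp
  finally show ?thesis .
qed

lemma coeff_pq: "coeff (pq n) n = piq n"
proof -
  have "coeff (pq n) n = lead_coeff (pq n)" by (simp add: degree_pq)
  also have "\<dots> = (\<Prod>i<n. lead_coeff [:1, -(q^i):])" unfolding pq_def lead_coeff_prod ..
  also have "\<dots> = piq n" using q0 by (simp add: piq_def)
  finally show ?thesis .
qed

lemma degree_rq: "degree (rq n) = n"
proof -
  have "degree (rq n) = (\<Sum>i<n. degree [:-(b*q^i), 1:])"
    unfolding rq_def by (rule degree_prod_sum_eq) auto
  also have "\<dots> = n" by simp
  finally show ?thesis .
qed

lemma coeff_rq: "coeff (rq n) n = 1"
proof -
  have "coeff (rq n) n = lead_coeff (rq n)" by (simp add: degree_rq)
  also have "\<dots> = (\<Prod>i<n. lead_coeff [:-(b*q^i), 1:])" unfolding rq_def lead_coeff_prod ..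
  also have "\<dots> = 1" by simp
  finally show ?thesis .
qed

definition Hh :: "nat \<Rightarrow> nat \<Rightarrow> 'a" where
  "Hh m j = qpoch (inverse (q^m)) q j * qpoch (b*q^m) q j * q^j
            / (qpoch q q j * qpoch b q j * qpoch b q (2*j))"
definition ph :: "'a \<Rightarrow> nat \<Rightarrow> 'a" where "ph y j = qpoch y q j * qpoch (b/y) q j"
definition P :: "nat \<Rightarrow> 'a \<Rightarrow> 'a \<Rightarrow> 'a" where "P m y d = G m d y * G m d (b/y)"
definition R :: "nat \<Rightarrow> 'a \<Rightarrow> 'a \<Rightarrow> 'a" where
  "R m y d = d^m * (\<Sum>j\<le>m. Hh m j * ph y j * ph d j)"

lemma G_sym: "G m d y = G m y d" unfolding G_def by (simp add: mult_ac)

lemma P_sym: "y \<noteq> 0 \<Longrightarrow> d \<noteq> 0 \<Longrightarrow> y^m * P m y d = d^m * P m d y"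
proof -
  assume y: "y \<noteq> 0" and d: "d \<noteq> 0"
  have "y^m * P m y d = G m d y * (y^m * G m d (b/y))" unfolding P_def by (simp add: mult_ac)
  also have "\<dots> = G m d y * (d^m * G m (b/d) y)" using T[OF y d] by simp
  also have "\<dots> = d^m * P m d y" unfolding P_def using G_sym[of m y d] G_sym[of m "b/d" y]
    by (simp add: mult_ac)
  finally show ?thesis .
qed

lemma R_sym: "y^m * R m y d = d^m * R m d y"
  unfolding R_def by (simp add: mult_ac)

lemma P_refl: "y \<noteq> 0 \<Longrightarrow> P m (b/y) d = P m y d"
  unfolding P_def using b0 by (simp add: mult_ac)

lemma R_refl: "y \<noteq> 0 \<Longrightarrow> R m (b/y) d = R m y d"
  unfolding R_def ph_def using b0 by (simp add: mult_ac)

definition A :: "nat \<Rightarrow> nat \<Rightarrow> nat \<Rightarrow> 'a" where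
  "A m n j = qpoch (inverse (q^m)) q j * qpoch (inverse (q^n)) q j * q^j / (qpoch q q j * qpoch b q j)"

lemma A_zero: "m < j \<or> n < j \<Longrightarrow> A m n j = 0"
  by (auto simp: A_def qpoch_inv_zero)

lemma G_grid: "G m (inverse (q^n)) y = (\<Sum>j\<le>n. A m n j * qpoch y q j)"
proof -
  have "G m (inverse (q^n)) y = (\<Sum>j\<le>m. A m n j * qpoch y q j)"
    unfolding G_def A_def by (rule sum.cong) (simp_all add: algebra_simps)
  also have "\<dots> = (\<Sum>j\<le>m+n. A m n j * qpoch y q j)"
    by (rule sum_extend_zero) (auto simp: A_zero)
  also have "\<dots> = (\<Sum>j\<le>n. A m n j * qpoch y q j)"
    by (rule sum_extend_zero[symmetric]) (auto simp: A_zero)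
  finally show ?thesis .
qed

lemma Hh_zero: "m < j \<Longrightarrow> Hh m j = 0" by (simp add: Hh_def qpoch_inv_zero)
lemma ph_zero: "n < j \<Longrightarrow> ph (inverse (q^n)) j = 0" by (simp add: ph_def qpoch_inv_zero)

lemma R_grid: "R m y (inverse (q^n)) = inverse (q^n)^m * (\<Sum>j\<le>n. Hh m j * ph y j * ph (inverse (q^n)) j)"
proof -
  have "(\<Sum>j\<le>m. Hh m j * ph y j * ph (inverse (q^n)) j) = (\<Sum>j\<le>m+n. Hh m j * ph y j * ph (inverse (q^n)) j)"
    by (rule sum_extend_zero) (auto simp: Hh_zero)
  also have "\<dots> = (\<Sum>j\<le>n. Hh m j * ph y j * ph (inverse (q^n)) j)"
    by (rule sum_extend_zero[symmetric]) (auto simp: ph_zero)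
  finally show ?thesis unfolding R_def by simp
qed

definition Pp :: "nat \<Rightarrow> nat \<Rightarrow> 'a poly" where
  "Pp m n = (\<Sum>j\<le>n. smult (A m n j) (pq j)) * (\<Sum>l\<le>n. smult (A m n l) (monom 1 (n-l) * rq l))"
definition Rp :: "nat \<Rightarrow> nat \<Rightarrow> 'a poly" where
  "Rp m n = smult (inverse (q^n)^m)
     (\<Sum>j\<le>n. smult (Hh m j * ph (inverse (q^n)) j) (pq j * monom 1 (n-j) * rq j))"

lemma poly_Pp: "y \<noteq> 0 \<Longrightarrow> poly (Pp m n) y = y^n * P m y (inverse (q^n))"
proof -
  assume y: "y \<noteq> 0"
  have by0: "b/y \<noteq> 0" using y b0 by simp
  have "poly (\<Sum>l\<le>n. smult (A m n l) (monom 1 (n-l) * rq l)) y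
      = (\<Sum>l\<le>n. y^n * (A m n l * qpoch (b/y) q l))"
    unfolding poly_sum
  proof (rule sum.cong[OF refl])
    fix l assume "l \<in> {..n}"
    then have "y^(n-l) * y^l = y^n" by (simp add: power_add[symmetric])
    then show "poly (smult (A m n l) (monom 1 (n-l) * rq l)) y = y^n * (A m n l * qpoch (b/y) q l)"
      using poly_rq[OF y, of l] by (simp add: poly_monom mult_ac)
  qed
  also have "\<dots> = y^n * G m (inverse (q^n)) (b/y)"
    unfolding G_grid[of m n "b/y"] sum_distrib_left ..
  finally show ?thesis
    unfolding Pp_def P_def poly_mult G_grid[of m n y]
    by (simp add: poly_sum poly_pq mult_ac)
qed

lemma poly_Rp: "y \<noteq> 0 \<Longrightarrow> poly (Rp m n) y = y^n * R m y (inverse (q^n))"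
proof -
  assume y: "y \<noteq> 0"
  have "poly (\<Sum>j\<le>n. smult (Hh m j * ph (inverse (q^n)) j) (pq j * monom 1 (n-j) * rq j)) y
      = (\<Sum>j\<le>n. y^n * (Hh m j * ph y j * ph (inverse (q^n)) j))"
    unfolding poly_sum
  proof (rule sum.cong[OF refl])
    fix j assume "j \<in> {..n}"
    then have "y^(n-j) * y^j = y^n" by (simp add: power_add[symmetric])
    then show "poly (smult (Hh m j * ph (inverse (q^n)) j) (pq j * monom 1 (n-j) * rq j)) y
       = y^n * (Hh m j * ph y j * ph (inverse (q^n)) j)"
      using poly_rq[OF y, of j] by (simp add: poly_monom poly_pq ph_def mult_ac)
  qed
  then show ?thesis unfolding Rp_def R_grid by (simp add: sum_distrib_left mult_ac)
qed

lemma deg_P1: "degree (\<Sum>j\<le>n. smult (A m n j) (pq j)) \<le> n"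
  by (rule degree_sum_le) (auto intro: order.trans[OF degree_smult_le] simp: degree_pq)

lemma deg_term: "l \<le> n \<Longrightarrow> degree (monom (1::'a) (n-l) * rq l) \<le> n"
  using degree_mult_le[of "monom (1::'a) (n-l)" "rq l"] degree_monom_le[of "1::'a" "n-l"]
  by (simp add: degree_rq)

lemma deg_P2: "degree (\<Sum>l\<le>n. smult (A m n l) (monom 1 (n-l) * rq l)) \<le> n"
  by (rule degree_sum_le) (auto intro: order.trans[OF degree_smult_le] deg_term)

lemma coeff_P1: "coeff (\<Sum>j\<le>n. smult (A m n j) (pq j)) n = A m n n * piq n"
proof -
  have "coeff (\<Sum>j\<le>n. smult (A m n j) (pq j)) n = (\<Sum>j<n. A m n j * coeff (pq j) n) + A m n n * coeff (pq n) n"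
    by (simp add: coeff_sum lessThan_Suc_atMost[symmetric])
  also have "(\<Sum>j<n. A m n j * coeff (pq j) n) = 0"
    by (rule sum.neutral) (auto simp: coeff_eq_0 degree_pq)
  finally show ?thesis by (simp add: coeff_pq)
qed

lemma coeff_P2: "coeff (\<Sum>l\<le>n. smult (A m n l) (monom 1 (n-l) * rq l)) n = (\<Sum>l\<le>n. A m n l)"
  unfolding coeff_sum by (rule sum.cong[OF refl]) (auto simp: coeff_monom_mult coeff_rq)

lemma deg_Pp: "degree (Pp m n) \<le> n + n"
  unfolding Pp_def using degree_mult_le deg_P1 deg_P2 by (meson add_mono order_trans)

lemma coeff_Pp: "coeff (Pp m n) (n+n) = A m n n * piq n * (\<Sum>l\<le>n. A m n l)"
  unfolding Pp_def coeff_mult_bound[OF deg_P1 deg_P2] coeff_P1 coeff_P2 ..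

lemma deg_term2: "j \<le> n \<Longrightarrow> degree (pq j * monom (1::'a) (n-j) * rq j) \<le> n + j"
proof -
  assume jn: "j \<le> n"
  have "degree (pq j * monom (1::'a) (n-j) * rq j) \<le> degree (pq j * monom (1::'a) (n-j)) + degree (rq j)"
    by (rule degree_mult_le)
  also have "\<dots> \<le> degree (pq j) + degree (monom (1::'a) (n-j)) + degree (rq j)"
    using degree_mult_le by (metis add_le_mono1)
  also have "\<dots> \<le> j + (n-j) + j" using degree_monom_le[of "1::'a" "n-j"] by (simp add: degree_pq degree_rq)
  finally show ?thesis using jn by simp
qed

lemma deg_Rp: "degree (Rp m n) \<le> n + n"
  unfolding Rp_def
  apply (rule order.trans[OF degree_smult_le])
  apply (rule degree_sum_le, simp)
  apply (rule order.trans[OF degree_smult_le])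
  using deg_term2 by (meson add_left_mono atMost_iff order_trans)

lemma coeff_Rp: "coeff (Rp m n) (n+n) = inverse (q^n)^m * (Hh m n * ph (inverse (q^n)) n) * piq n"
proof -
  have "coeff (\<Sum>j\<le>n. smult (Hh m j * ph (inverse (q^n)) j) (pq j * monom 1 (n-j) * rq j)) (n+n)
     = (\<Sum>j<n. Hh m j * ph (inverse (q^n)) j * coeff (pq j * monom 1 (n-j) * rq j) (n+n))
       + Hh m n * ph (inverse (q^n)) n * coeff (pq n * monom 1 (n-n) * rq n) (n+n)"
    by (simp add: coeff_sum lessThan_Suc_atMost[symmetric])
  also have "(\<Sum>j<n. Hh m j * ph (inverse (q^n)) j * coeff (pq j * monom 1 (n-j) * rq j) (n+n)) = 0"
  proof (rule sum.neutral, rule ballI)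
    fix j assume "j \<in> {..<n}"
    then have "degree (pq j * monom (1::'a) (n-j) * rq j) < n + n" using deg_term2[of j n] by simp
    then show "Hh m j * ph (inverse (q^n)) j * coeff (pq j * monom 1 (n-j) * rq j) (n+n) = 0"
      by (simp add: coeff_eq_0)
  qed
  also have "coeff (pq n * monom 1 (n-n) * rq n) (n+n) = piq n"
    using coeff_mult_bound[of "pq n" n "rq n" n] by (simp add: degree_pq degree_rq coeff_pq coeff_rq)
  finally show ?thesis unfolding Rp_def by (simp add: mult_ac)
qed

lemma top_eq: "A m n n * piq n * (\<Sum>l\<le>n. A m n l) = inverse (q^n)^m * (Hh m n * ph (inverse (q^n)) n) * piq n"
proof -
  have "(\<Sum>l\<le>n. A m n l) = (\<Sum>l\<le>n. cN n l * qpoch (inverse (q^m)) q l / qpoch b q l)"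
  proof (rule sum.cong[OF refl])
    fix l show "A m n l = cN n l * qpoch (inverse (q^m)) q l / qpoch b q l"
      unfolding A_def cN_def using qpoch_qq_nz[of l] qpoch_b_nz[of l] by (simp add: field_simps)
  qed
  also have "\<dots> = (\<Prod>i<n. inverse (q^m) - b*q^i) / qpoch b q n"
    by (rule CV_div) (rule qpoch_b_nz)
  also have "(\<Prod>i<n. inverse (q^m) - b*q^i) = inverse (q^n)^m * qpoch (b*q^m) q n"
  proof -
    have "(\<Prod>i<n. inverse (q^m) - b*q^i) = (\<Prod>i<n. inverse (q^m) * (1 - b*q^m*q^i))"
      by (rule prod.cong) (use q0 in \<open>auto simp: field_simps\<close>)
    also have "\<dots> = inverse (q^m)^n * qpoch (b*q^m) q n" by (simp add: prod.distrib qpoch_def)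
    also have "inverse (q^m)^n = inverse (q^n)^m"
      by (simp add: power_inverse[symmetric] power_mult[symmetric] mult.commute)
    finally show ?thesis .
  qed
  finally have sA: "(\<Sum>l\<le>n. A m n l) = inverse (q^n)^m * qpoch (b*q^m) q n / qpoch b q n" .
  have bd: "b / inverse (q^n) = b * q^n" by (simp add: divide_inverse)
  have b2: "qpoch b q (2*n) = qpoch b q n * qpoch (b*q^n) q n"
    using qpoch_add[of b q n n] by (simp add: mult_2)
  have nz: "qpoch q q n \<noteq> 0" "qpoch b q n \<noteq> 0" "qpoch (b*q^n) q n \<noteq> 0"
    using qpoch_qq_nz qpoch_b_nz qpoch_bk_nz by auto
  show ?thesis unfolding sA A_def[of m n n] Hh_def ph_def bd b2 using nz q0 by (simp add: field_simps)
qed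

lemma inv_pow_ne: "inverse (q^i) \<noteq> b * q^j"
proof
  assume "inverse (q^i) = b * q^j"
  then have "b * q^(j+i) = 1" using q0 by (simp add: power_add field_simps)
  with bnr show False by blast
qed

lemma grid: "y \<noteq> 0 \<Longrightarrow> P m y (inverse (q^n)) = R m y (inverse (q^n))"
proof (induct n arbitrary: y rule: less_induct)
  case (less n)
  define dn where "dn = inverse (q^n)"
  have dn0: "dn \<noteq> 0" using q0 by (simp add: dn_def)
  define D where "D = Pp m n - Rp m n"
  have degD: "degree D \<le> n + n" unfolding D_def using deg_Pp deg_Rp by (rule degree_diff_le)
  have cD: "coeff D (n+n) = 0" unfolding D_def using top_eq by (simp add: coeff_Pp coeff_Rp)
  have polyD: "poly D z = z^n * (P m z dn - R m z dn)" if "z \<noteq> 0" for z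
    unfolding D_def dn_def using that by (simp add: poly_Pp poly_Rp algebra_simps)
  have roots1: "poly D (inverse (q^i)) = 0" if "i < n" for i
  proof -
    have z: "inverse (q^i) \<noteq> 0" using q0 by simp
    have "inverse (q^i)^m * P m (inverse (q^i)) dn = dn^m * P m dn (inverse (q^i))"
      by (rule P_sym[OF z dn0])
    also have "P m dn (inverse (q^i)) = R m dn (inverse (q^i))"
      using less.hyps[OF that dn0[unfolded dn_def]] unfolding dn_def .
    also have "dn^m * R m dn (inverse (q^i)) = inverse (q^i)^m * R m (inverse (q^i)) dn"
      using R_sym[of dn m "inverse (q^i)"] by simp
    finally have "P m (inverse (q^i)) dn = R m (inverse (q^i)) dn" using z q0 by simp
    then show ?thesis using polyD[OF z] by simp
  qed
  have roots2: "poly D (b * q^i) = 0" if "i < n" for i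
  proof -
    have z: "b * q^i \<noteq> 0" "inverse (q^i) \<noteq> 0" using q0 b0 by auto
    have e: "b / (b * q^i) = inverse (q^i)" using b0 q0 by (simp add: field_simps)
    have "P m (b * q^i) dn = P m (inverse (q^i)) dn"
      using P_refl[OF z(2), of m dn] e by (metis b0 divide_divide_eq_right nonzero_mult_div_cancel_left)
    moreover have "R m (b * q^i) dn = R m (inverse (q^i)) dn"
      using R_refl[OF z(2), of m dn] e by (metis b0 divide_divide_eq_right nonzero_mult_div_cancel_left)
    moreover have "poly D (inverse (q^i)) = 0" by (rule roots1[OF that])
    ultimately show ?thesis using polyD[OF z(1)] polyD[OF z(2)] z by simp
  qed
  have D0: "D = 0"
  proof (rule ccontr)
    assume Dn: "D \<noteq> 0"
    have "degree D \<noteq> n + n" using cD Dn by (metis leading_coeff_0_iff)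
    with degD have dlt: "degree D < n + n" by simp
    define S where "S = (\<lambda>i. inverse (q^i)) ` {..<n} \<union> (\<lambda>i. b * q^i) ` {..<n}"
    have inj1: "inj_on (\<lambda>i. inverse (q^i)) {..<n}"
      by (rule inj_onI) (use q0 qpow_inj in auto)
    have inj2: "inj_on (\<lambda>i. b * q^i) {..<n}"
      by (rule inj_onI) (use b0 qpow_inj in auto)
    have disj: "(\<lambda>i. inverse (q^i)) ` {..<n} \<inter> (\<lambda>i. b * q^i) ` {..<n} = {}"
      using inv_pow_ne by auto
    have cS: "card S = n + n" unfolding S_def
      by (subst card_Un_disjoint) (use disj in \<open>auto simp: card_image inj1 inj2\<close>)
    have "S \<subseteq> {x. poly D x = 0}" unfolding S_def using roots1 roots2 by auto
    then have "card S \<le> card {x. poly D x = 0}"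
      by (rule card_mono[OF poly_roots_finite[OF Dn]])
    also have "\<dots> \<le> degree D" by (rule card_poly_roots_bound[OF Dn])
    finally show False using cS dlt by simp
  qed
  show ?case using polyD[OF less.prems] D0 less.prems unfolding dn_def by simp
qed

lemma main:
  assumes y: "y \<noteq> 0" and d: "d \<noteq> 0"
  shows "P m y d = R m y d"
proof -
  define Q1 where "Q1 = (\<Sum>j\<le>m. smult (qpoch (inverse (q^m)) q j * qpoch y q j * q^j
                      / (qpoch q q j * qpoch b q j)) (pq j))"
  define Q2 where "Q2 = (\<Sum>j\<le>m. smult (qpoch (inverse (q^m)) q j * qpoch (b/y) q j * q^j
                      / (qpoch q q j * qpoch b q j)) (pq j))"
  define QR where "QR = (\<Sum>j\<le>m. smult (Hh m j * ph y j) (pq j * monom 1 (m-j) * rq j))"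
  define DD where "DD = Q1 * Q2 - QR"
  have pQ1: "poly Q1 z = G m z y" for z
    unfolding Q1_def G_def poly_sum by (rule sum.cong) (simp_all add: poly_pq algebra_simps)
  have pQ2: "poly Q2 z = G m z (b/y)" for z
    unfolding Q2_def G_def poly_sum by (rule sum.cong) (simp_all add: poly_pq algebra_simps)
  have pQR: "poly QR z = R m y z" if z: "z \<noteq> 0" for z
  proof -
    have "poly QR z = (\<Sum>j\<le>m. z^m * (Hh m j * ph y j * ph z j))"
      unfolding QR_def poly_sum
    proof (rule sum.cong[OF refl])
      fix j assume "j \<in> {..m}"
      then have "z^(m-j) * z^j = z^m" by (simp add: power_add[symmetric])
      then show "poly (smult (Hh m j * ph y j) (pq j * monom 1 (m-j) * rq j)) z
         = z^m * (Hh m j * ph y j * ph z j)"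
        using poly_rq[OF z, of j] by (simp add: poly_monom poly_pq ph_def mult_ac)
    qed
    then show ?thesis unfolding R_def by (simp add: sum_distrib_left)
  qed
  have pDD: "poly DD z = P m y z - R m y z" if "z \<noteq> 0" for z
    unfolding DD_def P_def using that by (simp add: pQ1 pQ2 pQR)
  have DD0: "DD = 0"
  proof (rule ccontr)
    assume Dn: "DD \<noteq> 0"
    have "range (\<lambda>n. inverse (q^n)) \<subseteq> {x. poly DD x = 0}"
    proof
      fix x assume "x \<in> range (\<lambda>n. inverse (q^n))"
      then obtain n where x: "x = inverse (q^n)" by auto
      have "x \<noteq> 0" using q0 x by simp
      then show "x \<in> {x. poly DD x = 0}" using pDD grid[OF y, of m n] x by simp
    qed
    moreover have "infinite (range (\<lambda>n. inverse (q^n)))"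
      by (rule range_inj_infinite) (rule injI, use q0 qpow_inj in auto)
    ultimately show False using poly_roots_finite[OF Dn] finite_subset by blast
  qed
  show ?thesis using pDD[OF d] DD0 by simp
qed

end


lemma qpoch_sq: "qpoch a q j * qpoch (-a) q j = qpoch (a^2) (q^2) j"
  unfolding qpoch_def prod.distrib[symmetric]
  by (rule prod.cong) (simp_all add: algebra_simps power2_eq_square power_mult_distrib power_mult[symmetric])

lemma PQ: "(\<Prod>i<k. - (((q::'a::field)^2)^i)) = (-1)^k * q^(k*k - k)"
proof (induct k)
  case 0 show ?case by simp
next
  case (Suc k)
  have e: "Suc k * Suc k - Suc k = (k*k - k) + 2*k" by (simp add: algebra_simps)
  have f: "(q^2)^k = q^(2*k)" by (simp add: power_mult)
  have g: "q^(Suc k * Suc k - Suc k) = q^(k*k-k) * q^(2*k)" by (simp only: e power_add)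
  show ?case unfolding prod.lessThan_Suc Suc g f by simp
qed

lemma pow_frac_eq:
  fixes q :: "'a::field"
  assumes "q \<noteq> 0" "B + C' = B' + C"
  shows "q^B / q^C = q^B' / q^C'"
proof -
  have "q^B * q^C' = q^B' * q^C" by (simp add: power_add[symmetric] assms(2))
  then show ?thesis using assms(1) by (simp add: field_simps)
qed

lemma sum_shift_s:
  fixes f :: "nat \<Rightarrow> 'a::comm_monoid_add"
  shows "s \<le> n \<Longrightarrow> (\<Sum>k=s..n. f k) = (\<Sum>j\<le>n-s. f (s+j))"
  using sum.atLeastAtMost_shift_0[where g=f and m=s and n=n] by (simp add: atLeast0AtMost comp_def)

lemma pow_frac_eq2:
  fixes q :: "'a::field"
  assumes "q \<noteq> 0" "B + C' = B' + C" "even (e + e')"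
  shows "(-1)^e * q^B / q^C = (-1)^e' * q^B' / q^C'"
proof -
  have "(-1::'a)^e = (-1)^e'" using assms(3)
    by (metis (no_types, lifting) add.commute minus_one_power_iff odd_add)
  then show ?thesis using pow_frac_eq[OF assms(1,2)] by (metis times_divide_eq_right)
qed

theorem theorem2p5:
  fixes q x :: "'a::field_char_0" and n s :: nat
  assumes "s \<le> n" and "q \<noteq> 0" and "x \<noteq> 0"
    and "\<And>j::nat. j \<ge> 1 \<Longrightarrow> q ^ j \<noteq> 1"
  shows "(\<Sum>k=s..n. qpoch (inverse (q ^ (2*n))) (q^2) k * qpoch x q k * q ^ k
                      / (qpoch q q (k - s) * qpoch q q (k + s)))
       * (\<Sum>k=s..n. qpoch (inverse (q ^ (2*n))) (q^2) k * qpoch (q / x) q k * q ^ k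
                      / (qpoch q q (k - s) * qpoch q q (k + s)))
       = (-1) ^ n * (qpoch (q^2) (q^2) n)^2 * inverse (q ^ (n^2))
           / (qpoch (q^2) (q^2) (n - s) * qpoch (q^2) (q^2) (n + s))
         * (\<Sum>k=s..n. (-1) ^ k * qpoch (q^2) (q^2) (n + k) * qpoch x q k * qpoch (q / x) q k
                        * q powi (int (k^2) - 2 * int n * int k)
                      / (qpoch (q^2) (q^2) (n - k) * qpoch q q (k - s) * qpoch q q (k + s)
                         * qpoch q q (2*k)))"
proof -
  define m where "m = n - s"
  have nms: "n = m + s" using assms(1) by (simp add: m_def)
  define b where "b = q^(2*s+1)"
  have b0: "b \<noteq> 0" using assms(2) by (simp add: b_def)
  have bnr: "b * q^i \<noteq> 1" for i
    using assms(4)[of "2*s+1+i"] by (simp add: b_def power_add mult.assoc)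
  interpret qbctx q b
    by unfold_locales (use assms(2,4) b0 bnr in auto)
  interpret Q: qctx "q^2"
  proof
    show "q^2 \<noteq> 0" using assms(2) by simp
    show "(q^2)^j \<noteq> 1" if "j \<ge> 1" for j :: nat
      using assms(4)[of "2*j"] that by (simp add: power_mult[symmetric])
  qed
  define y where "y = x * q^s"
  define c where "c = inverse (q^m)"
  define d where "d = - c"
  have y0: "y \<noteq> 0" using assms(2,3) by (simp add: y_def)
  have d0: "d \<noteq> 0" using assms(2) by (simp add: d_def c_def)
  have by_: "b / y = q / x * q^s" using assms(2,3) by (simp add: b_def y_def field_simps power_add mult_2 mult_2_right)
  have M: "G m d y * G m d (b/y) = d^m * (\<Sum>j\<le>m. Hh m j * ph y j * ph d j)"
    using main[OF y0 d0] by (simp add: P_def R_def)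
  define \<alpha> where "\<alpha> = qpoch (inverse (q^(2*n))) (q^2) s"
  have qqnz: "qpoch q q j \<noteq> 0" for j by (rule qpoch_qq_nz)
  have bnz: "qpoch b q j \<noteq> 0" for j by (rule qpoch_b_nz)
  have hc2: "inverse (q^(2*n)) * (q^2)^s = c^2"
    unfolding c_def nms using assms(2) by (simp add: power_add power_mult[symmetric] field_simps power_inverse)
  have hQ: "qpoch (inverse (q^(2*n))) (q^2) (s+j) = \<alpha> * (qpoch c q j * qpoch d q j)" for j
    unfolding qpoch_add \<alpha>_def hc2 d_def qpoch_sq ..
  have hq2: "qpoch q q (s+j+s) = qpoch q q (2*s) * qpoch b q j" for j
  proof -
    have e: "s+j+s = 2*s+j" by simp
    show ?thesis unfolding e using qpoch_add[of q q "2*s" j] by (simp add: b_def)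
  qed
  have hx: "qpoch x q (s+j) = qpoch x q s * qpoch y q j" for j
    unfolding qpoch_add y_def ..
  have hqx: "qpoch (q/x) q (s+j) = qpoch (q/x) q s * qpoch (b/y) q j" for j
    unfolding qpoch_add by_ ..
  have S1: "(\<Sum>k=s..n. qpoch (inverse (q ^ (2*n))) (q^2) k * qpoch x q k * q ^ k
                      / (qpoch q q (k - s) * qpoch q q (k + s)))
      = \<alpha> * qpoch x q s * q^s / qpoch q q (2*s) * G m d y"
  proof -
    have "(\<Sum>k=s..n. qpoch (inverse (q ^ (2*n))) (q^2) k * qpoch x q k * q ^ k
                      / (qpoch q q (k - s) * qpoch q q (k + s)))
      = (\<Sum>j\<le>m. \<alpha> * qpoch x q s * q^s / qpoch q q (2*s) * (qpoch (inverse (q^m)) q j * qpoch d q j * qpoch y q j * q^j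
                      / (qpoch q q j * qpoch b q j)))"
      unfolding sum_shift_s[OF assms(1)] m_def[symmetric]
    proof (rule sum.cong[OF refl])
      fix j
      show "qpoch (inverse (q ^ (2*n))) (q^2) (s+j) * qpoch x q (s+j) * q ^ (s+j)
                      / (qpoch q q (s+j - s) * qpoch q q (s+j + s))
         = \<alpha> * qpoch x q s * q^s / qpoch q q (2*s) * (qpoch (inverse (q^m)) q j * qpoch d q j * qpoch y q j * q^j
                      / (qpoch q q j * qpoch b q j))"
        unfolding hQ hx hq2 c_def[symmetric] using qqnz[of j] qqnz[of "2*s"] bnz[of j]
        by (simp add: field_simps power_add)
    qed
    also have "\<dots> = \<alpha> * qpoch x q s * q^s / qpoch q q (2*s) * G m d y"
      unfolding G_def sum_distrib_left ..
    finally show ?thesis .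
  qed
  have S2: "(\<Sum>k=s..n. qpoch (inverse (q ^ (2*n))) (q^2) k * qpoch (q/x) q k * q ^ k
                      / (qpoch q q (k - s) * qpoch q q (k + s)))
      = \<alpha> * qpoch (q/x) q s * q^s / qpoch q q (2*s) * G m d (b/y)"
  proof -
    have "(\<Sum>k=s..n. qpoch (inverse (q ^ (2*n))) (q^2) k * qpoch (q/x) q k * q ^ k
                      / (qpoch q q (k - s) * qpoch q q (k + s)))
      = (\<Sum>j\<le>m. \<alpha> * qpoch (q/x) q s * q^s / qpoch q q (2*s) * (qpoch (inverse (q^m)) q j * qpoch d q j * qpoch (b/y) q j * q^j
                      / (qpoch q q j * qpoch b q j)))"
      unfolding sum_shift_s[OF assms(1)] m_def[symmetric]
    proof (rule sum.cong[OF refl])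
      fix j
      show "qpoch (inverse (q ^ (2*n))) (q^2) (s+j) * qpoch (q/x) q (s+j) * q ^ (s+j)
                      / (qpoch q q (s+j - s) * qpoch q q (s+j + s))
         = \<alpha> * qpoch (q/x) q s * q^s / qpoch q q (2*s) * (qpoch (inverse (q^m)) q j * qpoch d q j * qpoch (b/y) q j * q^j
                      / (qpoch q q j * qpoch b q j))"
        unfolding hQ hqx hq2 c_def[symmetric] using qqnz[of j] qqnz[of "2*s"] bnz[of j]
        by (simp add: field_simps power_add)
    qed
    also have "\<dots> = \<alpha> * qpoch (q/x) q s * q^s / qpoch q q (2*s) * G m d (b/y)"
      unfolding G_def sum_distrib_left ..
    finally show ?thesis .
  qed
  define Qp where "Qp k = qpoch (q^2) (q^2) k" for k
  have Qnz: "Qp k \<noteq> 0" for k unfolding Qp_def by (rule Q.qpoch_qq_nz)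
  define W where "W j = qpoch (inverse (q^(2*m))) (q^2) j" for j
  define Z where "Z j = qpoch (q^2*(q^2)^(n+s)) (q^2) j" for j
  define A2 where "A2 = (-1)^s * q^(s*s+s+2*s*m)"
  define A4 where "A4 j = (-1)^j * q^(j*(2*m+1-j))" for j
  have A2nz: "A2 \<noteq> 0" using assms(2) by (simp add: A2_def)
  have A4nz: "A4 j \<noteq> 0" for j using assms(2) by (simp add: A4_def)
  have P1: "\<alpha> = Qp n / (A2 * Qp m)"
  proof -
    have k: "qpoch (inverse ((q^2)^(s+m))) (q^2) s * Q.piq s * (q^2)^(s*(m+1)) * Qp m = Qp (s+m)"
      using Q.K1[of s m] by (simp add: Qp_def)
    have e1: "(q^2)^(s+m) = q^(2*n)" by (simp add: nms power_mult[symmetric] mult.commute add.commute)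
    have e2: "s*s - s + 2*(s*(m+1)) = s*s+s+2*s*m" by (cases s) (simp_all add: algebra_simps)
    have e3: "Q.piq s * (q^2)^(s*(m+1)) = A2"
      unfolding Q.piq_def PQ A2_def using e2 by (simp add: power_mult[symmetric] power_add[symmetric] mult.assoc add_ac)
    have kk: "\<alpha> * Q.piq s * (q^2)^(s*(m+1)) * Qp m = Qp n"
      using k unfolding e1 \<alpha>_def[symmetric] by (simp add: nms add.commute)
    have "\<alpha> * A2 * Qp m = \<alpha> * (Q.piq s * (q^2)^(s*(m+1))) * Qp m" unfolding e3 ..
    also have "\<dots> = Qp n" using kk by (simp add: mult.assoc)
    finally have "\<alpha> * A2 * Qp m = Qp n" .
    then show ?thesis using A2nz Qnz[of m] by (simp add: field_simps)
  qed
  have P2: "W j = Qp m / (A4 j * Qp (m-j))" if jm: "j \<le> m" for j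
  proof -
    have k: "qpoch (inverse ((q^2)^(j+(m-j)))) (q^2) j * Q.piq j * (q^2)^(j*((m-j)+1)) * Qp (m-j) = Qp (j+(m-j))"
      using Q.K1[of j "m-j"] by (simp add: Qp_def)
    have e1: "(q^2)^(j+(m-j)) = q^(2*m)" using jm by (simp add: power_mult[symmetric] mult.commute)
    have e2: "j*j - j + 2*(j*((m-j)+1)) = j*(2*m+1-j)"
    proof -
      obtain r where m: "m = j + r" using jm le_Suc_ex by blast
      show ?thesis unfolding m by (cases j) (simp_all add: algebra_simps)
    qed
    have e3: "Q.piq j * (q^2)^(j*((m-j)+1)) = A4 j"
      unfolding Q.piq_def PQ A4_def using e2 by (simp add: power_mult[symmetric] power_add[symmetric] mult.assoc add_ac)
    have kk: "W j * Q.piq j * (q^2)^(j*((m-j)+1)) * Qp (m-j) = Qp m"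
      using k unfolding e1 W_def[symmetric] using jm by simp
    have "W j * A4 j * Qp (m-j) = W j * (Q.piq j * (q^2)^(j*((m-j)+1))) * Qp (m-j)" unfolding e3 ..
    also have "\<dots> = Qp m" using kk by (simp add: mult.assoc)
    finally have "W j * A4 j * Qp (m-j) = Qp m" .
    then show ?thesis using A4nz[of j] Qnz[of "m-j"] by (simp add: field_simps)
  qed
  have cd: "qpoch c q j * qpoch d q j = W j" for j
  proof -
    have "c^2 = inverse (q^(2*m))" by (simp add: c_def power_inverse power_mult[symmetric] mult.commute)
    then show ?thesis unfolding W_def d_def qpoch_sq by simp
  qed
  have bz: "qpoch (b*q^m) q j * qpoch (b/d) q j = Z j" for j
  proof -
    have bd: "b/d = - (b*q^m)" using assms(2) by (simp add: d_def c_def field_simps)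
    have "(b*q^m)^2 = q^2*(q^2)^(n+s)"
      unfolding b_def nms by (simp add: power_mult_distrib power_add[symmetric] power_mult[symmetric] algebra_simps)
    then show ?thesis unfolding Z_def bd qpoch_sq by simp
  qed
  have HPP: "Hh m j * ph y j * ph d j
      = W j * Z j * q^j * qpoch y q j * qpoch (b/y) q j / (qpoch q q j * qpoch b q j * qpoch b q (2*j))" for j
  proof -
    have "Hh m j * ph y j * ph d j = (qpoch c q j * qpoch d q j) * (qpoch (b*q^m) q j * qpoch (b/d) q j)
       * q^j * qpoch y q j * qpoch (b/y) q j / (qpoch q q j * qpoch b q j * qpoch b q (2*j))"
      unfolding Hh_def ph_def c_def by (simp add: field_simps)
    then show ?thesis unfolding cd bz .
  qed
  define A3 where "A3 = d^m"
  define A7 where "A7 = inverse (q^(n^2))"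
  define A9 where "A9 j = q powi (int ((s+j)^2) - 2 * int n * int (s+j))" for j
  have A7nz: "A7 \<noteq> 0" using assms(2) by (simp add: A7_def)
  have PUx: "A9 j * (A2*A2*A4 j) * ((-1)^n*A7*(-1)^(s+j)) = q^s*q^s*A3*q^j" if jm: "j \<le> m" for j
  proof -
    obtain r where m: "m = j + r" using jm le_Suc_ex by blast
    define E2 where "E2 = s*s+s+2*s*m"
    define E4 where "E4 = j*(2*m+1-j)"
    have a9: "A9 j = q^((s+j)^2) / q^(2*n*(s+j))"
    proof -
      have e: "int ((s+j)^2) - 2 * int n * int (s+j) = int ((s+j)^2) - int (2*n*(s+j))" by simp
      have "q powi (int ((s+j)^2) - int (2*n*(s+j))) = q powi int ((s+j)^2) / q powi int (2*n*(s+j))"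
        by (rule power_int_diff) (use assms(2) in simp)
      then show ?thesis unfolding A9_def e power_int_of_nat .
    qed
    have a3: "A3 = (-1)^m / q^(m*m)"
      unfolding A3_def d_def c_def by (simp add: power_minus' power_inverse power_mult[symmetric] field_simps)
    have a7: "A7 = 1 / q^(n*n)" unfolding A7_def by (simp add: power2_eq_square divide_inverse)
    have "A9 j * (A2*A2*A4 j) * ((-1)^n*A7*(-1)^(s+j))
        = (-1)^(s+s+j+n+(s+j)) * q^((s+j)^2+E2+E2+E4) / q^(2*n*(s+j)+n*n)"
      unfolding a9 a7 A2_def A4_def E2_def[symmetric] E4_def[symmetric] using assms(2)
      by (simp add: power_add field_simps)
    also have "\<dots> = (-1)^m * q^(s+s+j) / q^(m*m)"
    proof (rule pow_frac_eq2[OF assms(2)])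
      have e4: "E4 = j*(j+2*r+1)" unfolding E4_def m by simp
      show "(s + j)\<^sup>2 + E2 + E2 + E4 + m * m = s + s + j + (2 * n * (s + j) + n * n)"
        unfolding e4 E2_def nms m by (simp add: algebra_simps power2_eq_square)
      show "even (s + s + j + n + (s + j) + m)" unfolding nms by presburger
    qed
    also have "\<dots> = q^s*q^s*A3*q^j" unfolding a3 using assms(2) by (simp add: power_add field_simps)
    finally show ?thesis .
  qed
  have PU: "A9 j = q^s*q^s*A3*q^j / ((A2*A2*A4 j) * ((-1)^n*A7*(-1)^(s+j)))" if jm: "j \<le> m" for j
    using PUx[OF jm] A2nz A4nz[of j] A7nz by (simp add: field_simps)
  have G1: "qpoch (q^2) (q^2) (n+(s+j)) = Qp (n+s) * Z j" for j
    unfolding Qp_def Z_def using qpoch_add[of "q^2" "q^2" "n+s" j] by (simp add: add.assoc)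
  have G3: "qpoch q q (2*(s+j)) = qpoch q q (2*s) * qpoch b q (2*j)" for j
  proof -
    have e: "2*(s+j) = 2*s+2*j" by simp
    show ?thesis unfolding e qpoch_add by (simp add: b_def)
  qed
  define K1 where "K1 = \<alpha> * qpoch x q s * q^s / qpoch q q (2*s)"
  define K2 where "K2 = \<alpha> * qpoch (q/x) q s * q^s / qpoch q q (2*s)"
  define Pre where "Pre = (-1) ^ n * (qpoch (q^2) (q^2) n)^2 * inverse (q ^ (n^2))
           / (qpoch (q^2) (q^2) (n - s) * qpoch (q^2) (q^2) (n + s))"
  define g where "g k = (-1) ^ k * qpoch (q^2) (q^2) (n + k) * qpoch x q k * qpoch (q / x) q k
                        * q powi (int (k^2) - 2 * int n * int k)
                      / (qpoch (q^2) (q^2) (n - k) * qpoch q q (k - s) * qpoch q q (k + s)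
                         * qpoch q q (2*k))" for k
  have key: "K1 * K2 * (A3 * (Hh m j * ph y j * ph d j)) = Pre * g (s+j)" if jm: "j \<le> m" for j
  proof -
    have nm: "n - (s+j) = m - j" "n - s = m" "s + j - s = j" using nms by auto
    have nz: "qpoch q q j \<noteq> 0" "qpoch b q j \<noteq> 0" "qpoch b q (2*j) \<noteq> 0" "qpoch q q (2*s) \<noteq> 0"
      "Qp m \<noteq> 0" "Qp (m-j) \<noteq> 0" "Qp (n+s) \<noteq> 0" "A2 \<noteq> 0" "A4 j \<noteq> 0" "A7 \<noteq> 0"
      using qqnz bnz Qnz A2nz A4nz A7nz by auto
    have gE: "g (s+j) = (-1)^(s+j) * (Qp (n+s) * Z j) * (qpoch x q s * qpoch y q j)
        * (qpoch (q/x) q s * qpoch (b/y) q j) * A9 j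
        / (Qp (m-j) * qpoch q q j * (qpoch q q (2*s) * qpoch b q j) * (qpoch q q (2*s) * qpoch b q (2*j)))"
      unfolding g_def G1 hx hqx nm hq2 G3 A9_def Qp_def ..
    have PreE: "Pre = (-1) ^ n * (Qp n)^2 * A7 / (Qp m * Qp (n+s))"
      unfolding Pre_def A7_def Qp_def nm ..
    show ?thesis
      unfolding gE PreE K1_def K2_def HPP P1 P2[OF jm] PU[OF jm] using nz
      by (simp add: field_simps power2_eq_square)
  qed
  have LHS: "(\<Sum>k=s..n. qpoch (inverse (q ^ (2*n))) (q^2) k * qpoch x q k * q ^ k
                      / (qpoch q q (k - s) * qpoch q q (k + s)))
       * (\<Sum>k=s..n. qpoch (inverse (q ^ (2*n))) (q^2) k * qpoch (q / x) q k * q ^ k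
                      / (qpoch q q (k - s) * qpoch q q (k + s)))
      = (\<Sum>j\<le>m. K1 * K2 * (A3 * (Hh m j * ph y j * ph d j)))"
  proof -
    have "(\<Sum>k=s..n. qpoch (inverse (q ^ (2*n))) (q^2) k * qpoch x q k * q ^ k
                      / (qpoch q q (k - s) * qpoch q q (k + s)))
       * (\<Sum>k=s..n. qpoch (inverse (q ^ (2*n))) (q^2) k * qpoch (q / x) q k * q ^ k
                      / (qpoch q q (k - s) * qpoch q q (k + s)))
      = K1 * K2 * (G m d y * G m d (b/y))"
      unfolding S1 S2 K1_def K2_def by (simp add: mult_ac)
    also have "\<dots> = (\<Sum>j\<le>m. K1 * K2 * (A3 * (Hh m j * ph y j * ph d j)))"
      unfolding M A3_def sum_distrib_left ..
    finally show ?thesis .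
  qed
  have RHS: "(-1) ^ n * (qpoch (q^2) (q^2) n)^2 * inverse (q ^ (n^2))
           / (qpoch (q^2) (q^2) (n - s) * qpoch (q^2) (q^2) (n + s))
         * (\<Sum>k=s..n. (-1) ^ k * qpoch (q^2) (q^2) (n + k) * qpoch x q k * qpoch (q / x) q k
                        * q powi (int (k^2) - 2 * int n * int k)
                      / (qpoch (q^2) (q^2) (n - k) * qpoch q q (k - s) * qpoch q q (k + s)
                         * qpoch q q (2*k)))
      = (\<Sum>j\<le>m. Pre * g (s+j))"
  proof -
    have "(\<Sum>k=s..n. (-1) ^ k * qpoch (q^2) (q^2) (n + k) * qpoch x q k * qpoch (q / x) q k
                        * q powi (int (k^2) - 2 * int n * int k)
                      / (qpoch (q^2) (q^2) (n - k) * qpoch q q (k - s) * qpoch q q (k + s)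
                         * qpoch q q (2*k))) = (\<Sum>k=s..n. g k)"
      unfolding g_def ..
    also have "\<dots> = (\<Sum>j\<le>m. g (s+j))" unfolding sum_shift_s[OF assms(1)] m_def ..
    finally have X: "(\<Sum>k=s..n. (-1) ^ k * qpoch (q^2) (q^2) (n + k) * qpoch x q k * qpoch (q / x) q k
                        * q powi (int (k^2) - 2 * int n * int k)
                      / (qpoch (q^2) (q^2) (n - k) * qpoch q q (k - s) * qpoch q q (k + s)
                         * qpoch q q (2*k))) = (\<Sum>j\<le>m. g (s+j))" .
    show ?thesis unfolding Pre_def[symmetric] X sum_distrib_left ..
  qed
  show ?thesis unfolding LHS RHS by (rule sum.cong) (simp_all add: key)
qed


end
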